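(* Consider the system $$\dot x=-y+x(x^3+xy^2)+\sum_{k=1}^2\varepsilon^k\Big(\lambda_kx+\sum_{i+j=4}a_{k,i,j}x^iy^j\Big),\qquad \dot y=x+y(x^3+xy^2)+\sum_{k=1}^2\varepsilon^k\Big(\lambda_ky+\sum_{i+j=4}b_{k,i,j}x^iy^j\Big),$$ and assume $a_{1,1,3}=b_{1,0,4}$, $a_{1,3,1}=b_{1,2,2}$, $b_{1,4,0}=\lambda_1=0$. Then for $z\in(0,3^{-1/3})$ the function $y_1$ has the form $$y_1(\theta,z)=\frac{1}{14580\,z^{11}(1-3z^3\sin\theta)^{4/3}}\Big(m_1(z)\ln(1-3z^3\sin\theta)+R(\theta,z)\Big),$$ where $R$ is a polynomial in $\cos\theta$, $\sin\theta$ and $z$, and $$m_1(z)=1620(b_{1,3,1}-a_{1,4,0})z^{12}+180(-a_{1,2,2}+2a_{1,4,0}+b_{1,1,3}-2b_{1,3,1})z^6+20(a_{1,2,2}-a_{1,0,4}-a_{1,4,0}-b_{1,1,3}+b_{1,3,1}).$$ Moreover the logarithmic term vanishes identically (i.e. $m_1\equiv0$ on $(0,3^{-1/3})$) if and only if $a_{1,2,2}=b_{1,1,3}$, $a_{1,4,0}=b_{1,3,1}$, and $a_{1,0,4}=0$.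
   Context: Write the system in polar coordinates $x=r\cos\theta,y=r\sin\theta$ and expand $dr/d\theta=F_0(\theta,r)+\varepsilon F_1(\theta,r)+O(\varepsilon^2)$, where $F_0=r^4\cos\theta$. Let $r(\theta,z)=z(1-3z^3\sin\theta)^{-1/3}$ (solution of $dr/d\theta=F_0$, $r(0)=z$) and $Y(\theta,z)=(1-3z^3\sin\theta)^{-4/3}$ (solution of $Y'=\partial_rF_0(\theta,r(\theta,z))Y$, $Y(0)=1$). Define $y_1(\theta,z)=Y(\theta,z)\int_0^\theta Y(s,z)^{-1}F_1(s,r(s,z))\,ds$. *)

theory Defs
  imports "HOL-Analysis.Analysis"
begin

definition fx :: "(nat \<Rightarrow> real) \<Rightarrow> (nat \<Rightarrow> nat \<Rightarrow> nat \<Rightarrow> real) \<Rightarrow> real \<Rightarrow> real \<Rightarrow> real \<Rightarrow> real" where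
  "fx lam a eps x y = - y + x * (x ^ 3 + x * y ^ 2)
     + (\<Sum>k\<in>{1, 2::nat}. eps ^ k * (lam k * x + (\<Sum>i\<in>{0..4::nat}. a k i (4 - i) * x ^ i * y ^ (4 - i))))"

definition fy :: "(nat \<Rightarrow> real) \<Rightarrow> (nat \<Rightarrow> nat \<Rightarrow> nat \<Rightarrow> real) \<Rightarrow> real \<Rightarrow> real \<Rightarrow> real \<Rightarrow> real" where
  "fy lam b eps x y = x + y * (x ^ 3 + x * y ^ 2)
     + (\<Sum>k\<in>{1, 2::nat}. eps ^ k * (lam k * y + (\<Sum>i\<in>{0..4::nat}. b k i (4 - i) * x ^ i * y ^ (4 - i))))"

definition rdot where
  "rdot lam a b eps \<theta> r =
     (let x = r * cos \<theta>; y = r * sin \<theta> in (x * fx lam a eps x y + y * fy lam b eps x y) / r)"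

definition thdot where
  "thdot lam a b eps \<theta> r =
     (let x = r * cos \<theta>; y = r * sin \<theta> in (x * fy lam b eps x y - y * fx lam a eps x y) / r ^ 2)"

text \<open>dr/d\<theta> = F0 + eps F1 + O(eps^2): F1 is the eps-derivative at eps = 0.\<close>

definition F1 :: "(nat \<Rightarrow> real) \<Rightarrow> (nat \<Rightarrow> nat \<Rightarrow> nat \<Rightarrow> real) \<Rightarrow> (nat \<Rightarrow> nat \<Rightarrow> nat \<Rightarrow> real) \<Rightarrow> real \<Rightarrow> real \<Rightarrow> real" where
  "F1 lam a b \<theta> r = deriv (\<lambda>eps. rdot lam a b eps \<theta> r / thdot lam a b eps \<theta> r) 0"

definition rsol :: "real \<Rightarrow> real \<Rightarrow> real" where
  "rsol \<theta> z = z * (1 - 3 * z ^ 3 * sin \<theta>) powr (-1/3)"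

definition Ysol :: "real \<Rightarrow> real \<Rightarrow> real" where
  "Ysol \<theta> z = (1 - 3 * z ^ 3 * sin \<theta>) powr (-4/3)"

text \<open>Signed integral from 0 to \<theta>.\<close>

definition y1 where
  "y1 lam a b \<theta> z = Ysol \<theta> z * (LBINT s=0..\<theta>. F1 lam a b s (rsol s z) / Ysol s z)"

definition m1 :: "(nat \<Rightarrow> nat \<Rightarrow> nat \<Rightarrow> real) \<Rightarrow> (nat \<Rightarrow> nat \<Rightarrow> nat \<Rightarrow> real) \<Rightarrow> real \<Rightarrow> real" where
  "m1 a b z = 1620 * (b 1 3 1 - a 1 4 0) * z ^ 12
     + 180 * (- a 1 2 2 + 2 * a 1 4 0 + b 1 1 3 - 2 * b 1 3 1) * z ^ 6
     + 20 * (a 1 2 2 - a 1 0 4 - a 1 4 0 - b 1 1 3 + b 1 3 1)"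

end

theory Submission
  imports Defs
begin



definition AA :: "(nat\<Rightarrow>nat\<Rightarrow>nat\<Rightarrow>real) \<Rightarrow> nat \<Rightarrow> real \<Rightarrow> real" where
 "AA a k t = (\<Sum>i\<in>{0..4::nat}. a k i (4-i) * cos t ^ i * sin t ^ (4-i))"

lemma set04: "{0..4::nat} = {0,1,2,3,4}" by auto

lemma AA_expand: "AA a k t = a k 0 4 * sin t ^ 4 + a k 1 3 * cos t * sin t ^ 3 + a k 2 2 * cos t ^ 2 * sin t ^ 2
   + a k 3 1 * cos t ^ 3 * sin t + a k 4 0 * cos t ^ 4"
  by (simp add: AA_def set04)

lemma sumr: "(\<Sum>i\<in>{0..4::nat}. a k i (4-i) * (r * cos t)^i * (r * sin t)^(4-i)) = r^4 * AA a k t"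
  by (simp add: AA_expand set04 algebra_simps power_mult_distrib eval_nat_numeral)

lemma rdot_eq:
  assumes "r \<noteq> 0"
  shows "rdot lam a b eps t r = r^4 * cos t + eps*(lam 1 * r + r^4*(cos t*AA a 1 t + sin t * AA b 1 t))
     + eps^2*(lam 2 * r + r^4*(cos t * AA a 2 t + sin t * AA b 2 t))"
proof -
  have s: "sin t ^ 2 + cos t ^ 2 = 1" by simp
  show ?thesis
    unfolding rdot_def fx_def fy_def Let_def sumr
    using assms
    by (simp add: field_simps power_mult_distrib, insert s, algebra)
qed

lemma thdot_eq:
  assumes "r \<noteq> 0"
  shows "thdot lam a b eps t r = 1 + eps*(r^3*(cos t*AA b 1 t - sin t * AA a 1 t))
     + eps^2*(r^3*(cos t * AA b 2 t - sin t * AA a 2 t))"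
proof -
  have s: "sin t ^ 2 + cos t ^ 2 = 1" by simp
  show ?thesis
    unfolding thdot_def fx_def fy_def Let_def sumr
    using assms
    by (simp add: field_simps power_mult_distrib, insert s, algebra)
qed

lemma quot_deriv:
  fixes p0 p1 p2 q1 q2 :: real
  shows "deriv (\<lambda>e. (p0 + e*p1 + e^2*p2) / (1 + e*q1 + e^2*q2)) 0 = p1 - p0*q1"
proof (rule DERIV_imp_deriv)
  show "((\<lambda>e. (p0 + e*p1 + e^2*p2) / (1 + e*q1 + e^2*q2)) has_real_derivative (p1 - p0*q1)) (at 0)"
    by (auto intro!: derivative_eq_intros)
qed

lemma F1_eq:
  assumes "r \<noteq> 0"
  shows "F1 lam a b t r = lam 1 * r + r^4*(cos t*AA a 1 t + sin t*AA b 1 t)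
     - r^4*cos t * (r^3*(cos t*AA b 1 t - sin t*AA a 1 t))"
proof -
  have "(\<lambda>eps. rdot lam a b eps t r / thdot lam a b eps t r) =
     (\<lambda>e. (r^4 * cos t + e*(lam 1 * r + r^4*(cos t*AA a 1 t + sin t * AA b 1 t))
     + e^2*(lam 2 * r + r^4*(cos t * AA a 2 t + sin t * AA b 2 t))) /
      (1 + e*(r^3*(cos t*AA b 1 t - sin t * AA a 1 t))
     + e^2*(r^3*(cos t * AA b 2 t - sin t * AA a 2 t))))"
    using assms by (simp add: rdot_eq thdot_eq)
  then show ?thesis unfolding F1_def by (simp add: quot_deriv)
qed

lemma integrand_eq:
  assumes z: "z > 0" and u: "1 - 3 * z^3 * sin t > 0" and lam: "lam 1 = 0"
  shows "F1 lam a b t (rsol t z) / Ysol t z = z^4*(cos t*AA a 1 t + sin t*AA b 1 t)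
     - z^7*cos t*(cos t*AA b 1 t - sin t*AA a 1 t) / (1 - 3 * z^3 * sin t)"
proof -
  define u where "u = 1 - 3 * z^3 * sin t"
  have up: "u > 0" using u u_def by simp
  have r: "rsol t z = z * u powr (-1/3)" unfolding rsol_def u_def ..
  have rpos: "rsol t z \<noteq> 0" using r up z by simp
  have Y: "Ysol t z = u powr (-4/3)" unfolding Ysol_def u_def ..
  have r4: "rsol t z ^ 4 = z^4 * u powr (-4/3)"
    unfolding r power_mult_distrib using up by (simp add: powr_power)
  have r3: "rsol t z ^ 3 = z^3 * u powr (-1)"
    unfolding r power_mult_distrib using up by (simp add: powr_power)
  have Yp: "u powr (-4/3) > 0" using up by simp
  have "F1 lam a b t (rsol t z) / Ysol t z = (rsol t z ^ 4 / u powr (-4/3)) * (cos t*AA a 1 t + sin t*AA b 1 t)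
     - (rsol t z ^4 / u powr (-4/3)) * cos t * (rsol t z^3*(cos t*AA b 1 t - sin t*AA a 1 t))"
    using rpos Yp lam by (simp add: F1_eq Y field_simps)
  also have "\<dots> = z^4*(cos t*AA a 1 t + sin t*AA b 1 t)
     - z^7*cos t*(cos t*AA b 1 t - sin t*AA a 1 t) / u"
    using Yp up unfolding r4 r3 by (simp add: powr_minus field_simps, algebra)
  finally show ?thesis unfolding u_def .
qed



definition R0 :: "(nat\<Rightarrow>nat\<Rightarrow>nat\<Rightarrow>real) \<Rightarrow> (nat\<Rightarrow>nat\<Rightarrow>nat\<Rightarrow>real) \<Rightarrow> real \<Rightarrow> real \<Rightarrow> real \<Rightarrow> real" where
  "R0 a b c w z = 60*w*z^3*(b 1 3 1) - 60*w*z^3*(b 1 1 3) - 60*w*z^3*(a 1 4 0) + 60*w*z^3*(a 1 2 2) - 60*w*z^3*(a 1 0 4) - 1080*w*z^9*(b 1 3 1) + 540*w*z^9*(b 1 1 3) + 1080*w*z^9*(a 1 4 0) - 540*w*z^9*(a 1 2 2) + 4860*w*z^15*(b 1 3 1) + 9720*w*z^15*(a 1 4 0) + 90*w^2*z^6*(b 1 3 1) - 90*w^2*z^6*(b 1 1 3) - 90*w^2*z^6*(a 1 4 0) + 90*w^2*z^6*(a 1 2 2) - 90*w^2*z^6*(a 1 0 4) - 1620*w^2*z^12*(b 1 3 1) + 810*w^2*z^12*(b 1 1 3) + 1620*w^2*z^12*(a 1 4 0) - 810*w^2*z^12*(a 1 2 2) + 180*w^3*z^9*(b 1 3 1) - 180*w^3*z^9*(b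 1 1 3) - 180*w^3*z^9*(a 1 4 0) + 180*w^3*z^9*(a 1 2 2) - 180*w^3*z^9*(a 1 0 4) + 1620*w^3*z^15*(b 1 3 1) + 1620*w^3*z^15*(b 1 1 3) - 6480*w^3*z^15*(a 1 4 0) + 3240*w^3*z^15*(a 1 2 2) + 405*w^4*z^12*(b 1 3 1) - 405*w^4*z^12*(b 1 1 3) - 405*w^4*z^12*(a 1 4 0) + 405*w^4*z^12*(a 1 2 2) - 405*w^4*z^12*(a 1 0 4) - 1944*w^5*z^15*(b 1 3 1) + 1944*w^5*z^15*(b 1 1 3) + 1944*w^5*z^15*(a 1 4 0) - 1944*w^5*z^15*(a 1 2 2) + 1944*w^5*z^15*(a 1 0 4) - 14580*c*z^15*(a 1 1 3) - 4860*c^3*z^15*(a 1 3 1) + 4860*c^3*z^15*(a 1 1 3)"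
definition R0c :: "(nat\<Rightarrow>nat\<Rightarrow>nat\<Rightarrow>real) \<Rightarrow> (nat\<Rightarrow>nat\<Rightarrow>nat\<Rightarrow>real) \<Rightarrow> real \<Rightarrow> real \<Rightarrow> real \<Rightarrow> real" where
  "R0c a b c w z = - 14580*z^15*(a 1 1 3) - 14580*c^2*z^15*(a 1 3 1) + 14580*c^2*z^15*(a 1 1 3)"
definition R0w :: "(nat\<Rightarrow>nat\<Rightarrow>nat\<Rightarrow>real) \<Rightarrow> (nat\<Rightarrow>nat\<Rightarrow>nat\<Rightarrow>real) \<Rightarrow> real \<Rightarrow> real \<Rightarrow> real \<Rightarrow> real" where
  "R0w a b c w z = 60*z^3*(b 1 3 1) - 60*z^3*(b 1 1 3) - 60*z^3*(a 1 4 0) + 60*z^3*(a 1 2 2) - 60*z^3*(a 1 0 4) - 1080*z^9*(b 1 3 1) + 540*z^9*(b 1 1 3) + 1080*z^9*(a 1 4 0) - 540*z^9*(a 1 2 2) + 4860*z^15*(b 1 3 1) + 9720*z^15*(a 1 4 0) + 180*w*z^6*(b 1 3 1) - 180*w*z^6*(b 1 1 3) - 180*w*z^6*(a 1 4 0) + 180*w*z^6*(a 1 2 2) - 180*w*z^6*(a 1 0 4) - 3240*w*z^12*(b 1 3 1) + 1620*w*z^12*(b 1 1 3) + 3240*w*z^12*(a 1 4 0) - 1620*w*z^12*(a 1 2 2) + 540*w^2*z^9*(b 1 3 1) - 540*w^2*z^9*(b 1 1 3) - 540*w^2*z^9*(a 1 4 0) + 540*w^2*z^9*(a 1 2 2)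 - 540*w^2*z^9*(a 1 0 4) + 4860*w^2*z^15*(b 1 3 1) + 4860*w^2*z^15*(b 1 1 3) - 19440*w^2*z^15*(a 1 4 0) + 9720*w^2*z^15*(a 1 2 2) + 1620*w^3*z^12*(b 1 3 1) - 1620*w^3*z^12*(b 1 1 3) - 1620*w^3*z^12*(a 1 4 0) + 1620*w^3*z^12*(a 1 2 2) - 1620*w^3*z^12*(a 1 0 4) - 9720*w^4*z^15*(b 1 3 1) + 9720*w^4*z^15*(b 1 1 3) + 9720*w^4*z^15*(a 1 4 0) - 9720*w^4*z^15*(a 1 2 2) + 9720*w^4*z^15*(a 1 0 4)"

definition AX :: "(nat\<Rightarrow>nat\<Rightarrow>nat\<Rightarrow>real) \<Rightarrow> real \<Rightarrow> real \<Rightarrow> real" where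
  "AX a c w = a 1 0 4 * w ^ 4 + a 1 1 3 * c * w ^ 3 + a 1 2 2 * c ^ 2 * w ^ 2 + a 1 3 1 * c ^ 3 * w + a 1 4 0 * c ^ 4"

lemma R0_deriv: "((\<lambda>s. R0 a b (cos s) (sin s) z) has_real_derivative
   (R0c a b (cos s) (sin s) z * (- sin s) + R0w a b (cos s) (sin s) z * cos s)) (at s)"
  unfolding R0_def R0c_def R0w_def
  apply (auto intro!: derivative_eq_intros)
  apply algebra
  done

lemma key_identity:
  fixes c w z :: real
  assumes "c^2 + w^2 = 1" "b 1 0 4 = a 1 1 3" "b 1 2 2 = a 1 3 1" "b 1 4 0 = 0"
  shows "-3*z^3*c*m1 a b z + (1-3*z^3*w)*(R0c a b c w z*(-w) + R0w a b c w z*c)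
     = 14580*z^15*(1-3*z^3*w)*(c*AX a c w + w*AX b c w) - 14580*z^18*c*(c*AX b c w - w*AX a c w)"
  using assms unfolding R0c_def R0w_def m1_def AX_def
  by algebra


lemma AA_AX: "AA a 1 s = AX a (cos s) (sin s)"
  by (simp add: AA_expand AX_def)

definition gg where
  "gg a b z s = z^4*(cos s*AA a 1 s + sin s*AA b 1 s)
     - z^7*cos s*(cos s*AA b 1 s - sin s*AA a 1 s) / (1 - 3 * z^3 * sin s)"

definition Phi where
  "Phi a b z s = (m1 a b z * ln (1 - 3 * z^3 * sin s) + R0 a b (cos s) (sin s) z) / (14580 * z^11)"

lemma upos: fixes z s :: real assumes "z > 0" "z^3 < 1/3" shows "1 - 3 * z^3 * sin s > 0"
proof -
  have "z^3 * sin s \<le> z^3" using mult_left_le[of "sin s" "z^3"] assms by simp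
  thus ?thesis using assms by linarith
qed

lemma simpl_aux:
  fixes u z G H c :: real
  assumes "u > 0" "z > 0"
  shows "(14580*z^15*u*G - 14580*z^18*c*H)/u/(14580*z^11) = z^4*G - z^7*c*H/u"
  using assms by (simp add: field_simps)

lemma Phi_deriv:
  assumes z: "z > 0" "z^3 < 1/3" and cs: "b 1 0 4 = a 1 1 3" "b 1 2 2 = a 1 3 1" "b 1 4 0 = 0"
  shows "(Phi a b z has_real_derivative gg a b z s) (at s)"
proof -
  define u where "u = 1 - 3 * z^3 * sin s"
  have up: "u > 0" unfolding u_def using upos[OF z] .
  have L: "((\<lambda>s. ln (1 - 3 * z^3 * sin s)) has_real_derivative (- 3 * z^3 * cos s) / u) (at s)"
    using up unfolding u_def by (auto intro!: derivative_eq_intros)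
  have D: "(Phi a b z has_real_derivative
     (m1 a b z * ((- 3 * z^3 * cos s) / u) + (R0c a b (cos s) (sin s) z * (- sin s) + R0w a b (cos s) (sin s) z * cos s))
       / (14580 * z^11)) (at s)"
    unfolding Phi_def
    by (intro DERIV_cdivide DERIV_add DERIV_cmult L R0_deriv)
  have KI: "-3*z^3*cos s*m1 a b z + u*(R0c a b (cos s) (sin s) z*(-sin s) + R0w a b (cos s) (sin s) z*cos s)
     = 14580*z^15*u*(cos s*AX a (cos s) (sin s) + sin s*AX b (cos s) (sin s))
       - 14580*z^18*cos s*(cos s*AX b (cos s) (sin s) - sin s*AX a (cos s) (sin s))"
    unfolding u_def by (rule key_identity) (use cs in auto)
  have "(m1 a b z * ((- 3 * z^3 * cos s) / u) + (R0c a b (cos s) (sin s) z * (- sin s) + R0w a b (cos s) (sin s) z * cos s))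
       / (14580 * z^11) = gg a b z s"
  proof -
    have "(m1 a b z * ((- 3 * z^3 * cos s) / u) + (R0c a b (cos s) (sin s) z * (- sin s) + R0w a b (cos s) (sin s) z * cos s))
       = (-3*z^3*cos s*m1 a b z + u*(R0c a b (cos s) (sin s) z*(-sin s) + R0w a b (cos s) (sin s) z*cos s)) / u"
      using up by (simp add: field_simps)
    also have "\<dots> = (14580*z^15*u*(cos s*AX a (cos s) (sin s) + sin s*AX b (cos s) (sin s))
       - 14580*z^18*cos s*(cos s*AX b (cos s) (sin s) - sin s*AX a (cos s) (sin s))) / u"
      by (simp only: KI)
    finally have e: "(m1 a b z * ((- 3 * z^3 * cos s) / u) + (R0c a b (cos s) (sin s) z * (- sin s) + R0w a b (cos s) (sin s) z * cos s))
      = (14580*z^15*u*(cos s*AX a (cos s) (sin s) + sin s*AX b (cos s) (sin s))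
       - 14580*z^18*cos s*(cos s*AX b (cos s) (sin s) - sin s*AX a (cos s) (sin s))) / u" .
    show ?thesis
      unfolding e gg_def AA_AX u_def[symmetric]
      using simpl_aux[OF up z(1)] by simp
  qed
  with D show ?thesis by simp
qed

lemma integral_eq:
  assumes z: "z > 0" "z^3 < 1/3" and cs: "b 1 0 4 = a 1 1 3" "b 1 2 2 = a 1 3 1" "b 1 4 0 = 0"
    and lam: "lam 1 = 0"
  shows "(LBINT s=0..t. F1 lam a b s (rsol s z) / Ysol s z) = Phi a b z t - Phi a b z 0"
proof -
  have "(\<lambda>s. F1 lam a b s (rsol s z) / Ysol s z) = gg a b z"
  proof (intro ext)
    fix s show "F1 lam a b s (rsol s z) / Ysol s z = gg a b z s"
      using integrand_eq[where z=z and t=s and lam=lam] z upos[OF z, of s] lam unfolding gg_def by simp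
  qed
  moreover have "(LBINT s=ereal 0..ereal t. gg a b z s) = Phi a b z t - Phi a b z 0"
  proof (rule interval_integral_FTC_finite)
    have "\<And>s. 1 - 3 * z^3 * sin s \<noteq> 0" using upos[OF z] by (metis less_irrefl)
    then show "continuous_on {min 0 t..max 0 t} (gg a b z)"
      unfolding gg_def AA_expand by (intro continuous_intros) auto
    show "(Phi a b z has_vector_derivative gg a b z x) (at x within {min 0 t..max 0 t})" for x
      using Phi_deriv[where a=a and b=b and z=z and s=x, OF z cs]
      by (simp add: has_real_derivative_iff_has_vector_derivative[symmetric] has_field_derivative_at_within)
  qed
  ultimately show ?thesis unfolding zero_ereal_def by simp
qed



definition mono3 :: "real \<times> nat \<times> nat \<times> nat \<Rightarrow> real \<Rightarrow> real \<Rightarrow> real" where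
  "mono3 m t z = (case m of (a,i,j,k) \<Rightarrow> a * cos t ^ i * sin t ^ j * z ^ k)"

definition lpoly :: "(real \<Rightarrow> real \<Rightarrow> real) \<Rightarrow> bool" where
  "lpoly f \<longleftrightarrow> (\<exists>xs. \<forall>t z. f t z = (\<Sum>m\<leftarrow>xs. mono3 m t z))"

lemma lpoly_const: "lpoly (\<lambda>t z. a)"
  unfolding lpoly_def by (rule exI[of _ "[(a,0,0,0)]"]) (simp add: mono3_def)
lemma lpoly_cos: "lpoly (\<lambda>t z. cos t)"
  unfolding lpoly_def by (rule exI[of _ "[(1,1,0,0)]"]) (simp add: mono3_def)
lemma lpoly_sin: "lpoly (\<lambda>t z. sin t)"
  unfolding lpoly_def by (rule exI[of _ "[(1,0,1,0)]"]) (simp add: mono3_def)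
lemma lpoly_z: "lpoly (\<lambda>t z. z)"
  unfolding lpoly_def by (rule exI[of _ "[(1,0,0,1)]"]) (simp add: mono3_def)
lemma lpoly_add: "lpoly f \<Longrightarrow> lpoly g \<Longrightarrow> lpoly (\<lambda>t z. f t z + g t z)"
  unfolding lpoly_def by (metis sum_list_append map_append)

definition pmul where
  "pmul xs ys = concat (map (\<lambda>(a,i,j,k). map (\<lambda>(b,i',j',k'). (a*b,i+i',j+j',k+k')) ys) xs)"

lemma pmul_eq: "(\<Sum>m\<leftarrow>pmul xs ys. mono3 m t z) = (\<Sum>m\<leftarrow>xs. mono3 m t z) * (\<Sum>m\<leftarrow>ys. mono3 m t z)"
proof (induction xs)
  case Nil then show ?case by (simp add: pmul_def)
next
  case (Cons x xs)
  obtain a i j k where x: "x = (a,i,j,k)" by (cases x) auto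
  have "(\<Sum>m\<leftarrow>map (\<lambda>(b,i',j',k'). (a*b,i+i',j+j',k+k')) ys. mono3 m t z)
        = mono3 x t z * (\<Sum>m\<leftarrow>ys. mono3 m t z)"
  proof (induction ys)
    case Nil then show ?case by simp
  next
    case (Cons y ys)
    obtain b i' j' k' where y: "y = (b,i',j',k')" by (cases y) auto
    show ?case using Cons by (simp add: y x mono3_def power_add algebra_simps)
  qed
  then have h: "(\<Sum>m\<leftarrow>map (\<lambda>(b,i',j',k'). (a*b,i+i',j+j',k+k')) ys. mono3 m t z)
        = mono3 x t z * (\<Sum>m\<leftarrow>ys. mono3 m t z)" .
  have "pmul (x#xs) ys = map (\<lambda>(b,i',j',k'). (a*b,i+i',j+j',k+k')) ys @ pmul xs ys"
    by (simp add: pmul_def x)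
  then have "(\<Sum>m\<leftarrow>pmul (x#xs) ys. mono3 m t z) = (\<Sum>m\<leftarrow>map (\<lambda>(b,i',j',k'). (a*b,i+i',j+j',k+k')) ys. mono3 m t z) + (\<Sum>m\<leftarrow>pmul xs ys. mono3 m t z)"
    by (simp only: map_append sum_list_append)
  also have "\<dots> = mono3 x t z * (\<Sum>m\<leftarrow>ys. mono3 m t z) + (\<Sum>m\<leftarrow>xs. mono3 m t z) * (\<Sum>m\<leftarrow>ys. mono3 m t z)"
    by (simp only: h Cons.IH)
  finally show ?case by (simp add: algebra_simps)
qed

lemma lpoly_mult: "lpoly f \<Longrightarrow> lpoly g \<Longrightarrow> lpoly (\<lambda>t z. f t z * g t z)"
  unfolding lpoly_def by (metis pmul_eq)

lemma lpoly_minus: "lpoly f \<Longrightarrow> lpoly (\<lambda>t z. - f t z)"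
proof -
  assume "lpoly f"
  then have "lpoly (\<lambda>t z. (-1) * f t z)" by (intro lpoly_mult lpoly_const)
  then show ?thesis by simp
qed

lemma lpoly_diff: "lpoly f \<Longrightarrow> lpoly g \<Longrightarrow> lpoly (\<lambda>t z. f t z - g t z)"
  using lpoly_add[of f "\<lambda>t z. - g t z"] lpoly_minus[of g] by simp

lemma lpoly_power: "lpoly f \<Longrightarrow> lpoly (\<lambda>t z. f t z ^ n)"
  by (induction n) (auto intro: lpoly_mult lpoly_const)

lemmas lpoly_intros = lpoly_add lpoly_diff lpoly_mult lpoly_minus lpoly_power lpoly_cos lpoly_sin lpoly_z lpoly_const

definition polyrep :: "nat \<Rightarrow> (nat \<Rightarrow> nat \<Rightarrow> nat \<Rightarrow> real) \<Rightarrow> real \<Rightarrow> real \<Rightarrow> real" where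
  "polyrep N c t z = (\<Sum>i\<le>N. \<Sum>j\<le>N. \<Sum>k\<le>N. c i j k * cos t ^ i * sin t ^ j * z ^ k)"

lemma polyrep_add: "polyrep N (\<lambda>i j k. c i j k + d i j k) t z = polyrep N c t z + polyrep N d t z"
  unfolding polyrep_def by (simp add: sum.distrib ring_distribs)

lemma polyrep_zero: "polyrep N (\<lambda>i j k. 0) t z = 0"
  unfolding polyrep_def by simp

lemma polyrep_delta:
  assumes "i0 \<le> N" "j0 \<le> N" "k0 \<le> N"
  shows "polyrep N (\<lambda>i j k. if i = i0 \<and> j = j0 \<and> k = k0 then a else 0) t z = a * cos t ^ i0 * sin t ^ j0 * z ^ k0"
proof -
  have m: "\<And>P (x::real) y. (if P then x else 0) * y = (if P then x * y else 0)" by simp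
  have inner: "(\<Sum>k\<le>N. (if i = i0 \<and> j = j0 \<and> k = k0 then a else 0) * cos t ^ i * sin t ^ j * z ^ k)
      = (if i = i0 \<and> j = j0 then a * cos t ^ i * sin t ^ j * z ^ k0 else 0)" for i j
  proof (cases "i = i0 \<and> j = j0")
    case True
    then have "(\<Sum>k\<le>N. (if i = i0 \<and> j = j0 \<and> k = k0 then a else 0) * cos t ^ i * sin t ^ j * z ^ k)
      = (\<Sum>k\<le>N. if k = k0 then a * cos t ^ i * sin t ^ j * z ^ k else 0)"
      by (intro sum.cong refl) auto
    then show ?thesis using True assms by (simp add: sum.delta')
  next
    case False
    then have "\<And>k. \<not> (i = i0 \<and> j = j0 \<and> k = k0)" by auto
    then show ?thesis using False by (simp only: if_False) simp
  qed
  have mid: "(\<Sum>j\<le>N. (if i = i0 \<and> j = j0 then a * cos t ^ i * sin t ^ j * z ^ k0 else 0))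
      = (if i = i0 then a * cos t ^ i * sin t ^ j0 * z ^ k0 else 0)" for i
  proof (cases "i = i0")
    case True
    then have "(\<Sum>j\<le>N. (if i = i0 \<and> j = j0 then a * cos t ^ i * sin t ^ j * z ^ k0 else 0))
       = (\<Sum>j\<le>N. if j = j0 then a * cos t ^ i * sin t ^ j * z ^ k0 else 0)"
      by (intro sum.cong refl) auto
    then show ?thesis using True assms by (simp add: sum.delta')
  qed simp
  show ?thesis unfolding polyrep_def inner mid using assms by (simp add: sum.delta')
qed

lemma list_polyrep:
  assumes "\<forall>(a,i,j,k)\<in>set xs. i \<le> N \<and> j \<le> N \<and> k \<le> N"
  shows "(\<Sum>m\<leftarrow>xs. mono3 m t z) = polyrep N (\<lambda>i j k. \<Sum>(a,i',j',k')\<leftarrow>xs. if i = i' \<and> j = j' \<and> k = k' then a else 0) t z"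
  using assms
proof (induction xs)
  case Nil then show ?case by (simp add: polyrep_zero)
next
  case (Cons x xs)
  obtain a i j k where x: "x = (a,i,j,k)" by (cases x) auto
  show ?case using Cons
    by (simp add: x polyrep_add polyrep_delta mono3_def)
qed

lemma lpoly_polyrep:
  assumes "lpoly f"
  shows "\<exists>N c. \<forall>t z. f t z = (\<Sum>i\<le>N. \<Sum>j\<le>N. \<Sum>k\<le>N. c i j k * cos t ^ i * sin t ^ j * z ^ k)"
proof -
  obtain xs where xs: "\<forall>t z. f t z = (\<Sum>m\<leftarrow>xs. mono3 m t z)" using assms unfolding lpoly_def by blast
  define N where "N = Max (insert 0 ((\<lambda>(a,i,j,k). max i (max j k)) ` set xs))"
  have bd: "\<forall>(a,i,j,k)\<in>set xs. i \<le> N \<and> j \<le> N \<and> k \<le> N"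
  proof (clarify)
    fix a i j k assume "(a,i,j,k) \<in> set xs"
    then have "max i (max j k) \<le> N" unfolding N_def
      by (intro Max_ge) (auto intro!: image_eqI[where x="(a,i,j,k)"])
    then show "i \<le> N \<and> j \<le> N \<and> k \<le> N" by simp
  qed
  define C where "C = (\<lambda>i j k. \<Sum>(a,i',j',k')\<leftarrow>xs. if i = i' \<and> j = j' \<and> k = k' then a else 0)"
  have "\<forall>t z. f t z = polyrep N C t z"
    using xs list_polyrep[OF bd] unfolding C_def by simp
  then show ?thesis unfolding polyrep_def by blast
qed


lemma cube_bound: "((3::real) powr (-1/3)) ^ 3 = 1/3"
proof -
  have "((3::real) powr (-1/3)) ^ 3 = 3 powr (real 3 * (-1/3))" by (rule powr_power) simp
  also have "\<dots> = 3 powr (- 1)" by simp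
  also have "\<dots> = 1/3" by (simp add: powr_minus_divide)
  finally show ?thesis .
qed

lemma z3_bound: fixes z :: real assumes "z \<in> {0<..<3 powr (-1/3)}" shows "z^3 < 1/3"
proof -
  have "z^3 < (3 powr (-1/3)) ^ 3" using assms by (intro power_strict_mono) auto
  then show ?thesis by (simp only: cube_bound)
qed

lemma half_in: "(1/2::real) < 3 powr (-1/3)"
proof (rule power_less_imp_less_base[where n=3])
  show "(1/2::real) ^ 3 < (3 powr (-1/3)) ^ 3" by (simp only: cube_bound) (simp add: power3_eq_cube)
qed simp

theorem mainTheorem9:
  fixes lam :: "nat \<Rightarrow> real" and a b :: "nat \<Rightarrow> nat \<Rightarrow> nat \<Rightarrow> real"
  assumes "a 1 1 3 = b 1 0 4" and "a 1 3 1 = b 1 2 2" and "b 1 4 0 = 0" and "lam 1 = 0"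
  shows "(\<exists>(N::nat) (c :: nat \<Rightarrow> nat \<Rightarrow> nat \<Rightarrow> real).
            \<forall>z \<in> {0 <..< 3 powr (-1/3)}. \<forall>\<theta>::real.
              y1 lam a b \<theta> z =
                1 / (14580 * z ^ 11 * (1 - 3 * z ^ 3 * sin \<theta>) powr (4/3))
                * (m1 a b z * ln (1 - 3 * z ^ 3 * sin \<theta>)
                   + (\<Sum>i\<le>N. \<Sum>j\<le>N. \<Sum>k\<le>N. c i j k * cos \<theta> ^ i * sin \<theta> ^ j * z ^ k)))
         \<and> ((\<forall>z \<in> {0 <..< 3 powr (-1/3)}. m1 a b z = 0) \<longleftrightarrow>
              (a 1 2 2 = b 1 1 3 \<and> a 1 4 0 = b 1 3 1 \<and> a 1 0 4 = 0))"
proof -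
  have cs: "b 1 0 4 = a 1 1 3" "b 1 2 2 = a 1 3 1" "b 1 4 0 = 0" using assms by auto
  have lp: "lpoly (\<lambda>t z. R0 a b (cos t) (sin t) z - R0 a b 1 0 z)"
    unfolding R0_def by (intro lpoly_intros)
  obtain N c where Nc: "\<forall>t z. R0 a b (cos t) (sin t) z - R0 a b 1 0 z
      = (\<Sum>i\<le>N. \<Sum>j\<le>N. \<Sum>k\<le>N. c i j k * cos t ^ i * sin t ^ j * z ^ k)"
    using lpoly_polyrep[OF lp] by blast
  have P1: "\<forall>z \<in> {0 <..< 3 powr (-1/3)}. \<forall>\<theta>::real.
              y1 lam a b \<theta> z =
                1 / (14580 * z ^ 11 * (1 - 3 * z ^ 3 * sin \<theta>) powr (4/3))
                * (m1 a b z * ln (1 - 3 * z ^ 3 * sin \<theta>)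
                   + (\<Sum>i\<le>N. \<Sum>j\<le>N. \<Sum>k\<le>N. c i j k * cos \<theta> ^ i * sin \<theta> ^ j * z ^ k))"
  proof (intro ballI allI)
    fix z \<theta> :: real assume zin: "z \<in> {0 <..< 3 powr (-1/3)}"
    have zp: "z > 0" using zin by simp
    have z3: "z^3 < 1/3" using z3_bound[OF zin] .
    have up: "1 - 3 * z^3 * sin \<theta> > 0" using upos[OF zp z3] .
    have "y1 lam a b \<theta> z = Ysol \<theta> z * (Phi a b z \<theta> - Phi a b z 0)"
      unfolding y1_def using integral_eq[where a=a and b=b and z=z and lam=lam, OF zp z3 cs assms(4)] by simp
    also have "\<dots> = 1 / (14580 * z ^ 11 * (1 - 3 * z ^ 3 * sin \<theta>) powr (4/3))
                * (m1 a b z * ln (1 - 3 * z ^ 3 * sin \<theta>)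
                   + (R0 a b (cos \<theta>) (sin \<theta>) z - R0 a b 1 0 z))"
      unfolding Phi_def Ysol_def using up zp by (simp add: powr_minus field_simps)
    finally show "y1 lam a b \<theta> z =
                1 / (14580 * z ^ 11 * (1 - 3 * z ^ 3 * sin \<theta>) powr (4/3))
                * (m1 a b z * ln (1 - 3 * z ^ 3 * sin \<theta>)
                   + (\<Sum>i\<le>N. \<Sum>j\<le>N. \<Sum>k\<le>N. c i j k * cos \<theta> ^ i * sin \<theta> ^ j * z ^ k))"
      using Nc by simp
  qed
  have P2: "(\<forall>z \<in> {0 <..< 3 powr (-1/3)}. m1 a b z = 0) \<longleftrightarrow>
              (a 1 2 2 = b 1 1 3 \<and> a 1 4 0 = b 1 3 1 \<and> a 1 0 4 = 0)"
  proof
    assume H: "\<forall>z \<in> {0 <..< 3 powr (-1/3)}. m1 a b z = 0"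
    have h2: "(1/2::real) \<in> {0 <..< 3 powr (-1/3)}" using half_in by simp
    have h3: "(1/3::real) \<in> {0 <..< 3 powr (-1/3)}" using half_in by simp
    have h4: "(1/4::real) \<in> {0 <..< 3 powr (-1/3)}" using half_in by simp
    have e2: "m1 a b (1/2) = 0" using H h2 by blast
    have e3: "m1 a b (1/3) = 0" using H h3 by blast
    have e4: "m1 a b (1/4) = 0" using H h4 by blast
    define p where "p = b 1 3 1 - a 1 4 0"
    define q where "q = - a 1 2 2 + 2 * a 1 4 0 + b 1 1 3 - 2 * b 1 3 1"
    define r where "r = a 1 2 2 - a 1 0 4 - a 1 4 0 - b 1 1 3 + b 1 3 1"
    have m: "m1 a b z = 1620 * p * z^12 + 180 * q * z^6 + 20 * r" for z
      unfolding m1_def p_def q_def r_def ..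
    have f2: "1620 * p / 4096 + 180 * q / 64 + 20 * r = 0" using e2 unfolding m by (simp add: power_divide)
    have f3: "1620 * p / 531441 + 180 * q / 729 + 20 * r = 0" using e3 unfolding m by (simp add: power_divide)
    have f4: "1620 * p / 16777216 + 180 * q / 4096 + 20 * r = 0" using e4 unfolding m by (simp add: power_divide)
    have p0: "p = 0" using f2 f3 f4 by linarith
    have q0: "q = 0" using f2 f3 f4 by linarith
    have r0: "r = 0" using f2 f3 f4 by linarith
    show "a 1 2 2 = b 1 1 3 \<and> a 1 4 0 = b 1 3 1 \<and> a 1 0 4 = 0"
      using p0 q0 r0 unfolding p_def q_def r_def by linarith
  next
    assume "a 1 2 2 = b 1 1 3 \<and> a 1 4 0 = b 1 3 1 \<and> a 1 0 4 = 0"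
    then show "\<forall>z \<in> {0 <..< 3 powr (-1/3)}. m1 a b z = 0" unfolding m1_def by simp
  qed
  show ?thesis using P1 P2 by blast
qed

end
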